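(* Suppose that for each agent $i\in\mathcal{N}$ the support set is a polytope $\Xi_i=\{\xi_i\in\mathbb{R}^p: C_i\xi_i\le d_i\}$ with $C_i\in\mathbb{R}^{m\times p}$, $d_i\in\mathbb{R}^m$, and that $h_i(x,\xi_i)=\max_{\ell=1,\dots,L_i}h_{\ell_i}(x,\xi_i)$ with $h_{\ell_i}(x,\xi_i)=a_{\ell_i}(x)^\top\xi_i+b_{\ell_i}(x)$, where $a_{\ell_i}:\mathbb{R}^{nN}\to\mathbb{R}^p$, $b_{\ell_i}:\mathbb{R}^{nN}\to\mathbb{R}$. Consider the generalized Nash equilibrium problem in which each agent $i$, given $x_{-i}$, solves $$\min_{x_i\in X_i,\ \lambda_i,\ s_{k},\ \gamma_{k,\ell}}\ \lambda_i\epsilon_i+\frac1{K_i}\sum_{k=1}^{K_i}s_{k}$$ subject to, for all $k\in\{1,\dots,K_i\}$, $\ell\in\{1,\dots,L_i\}$: $$b_{\ell_i}(x_i,x_{-i})+a_{\ell_i}(x_i,x_{-i})^\top\xi_i^{(k)}+\gamma_{k,\ell}^\top(d_i-C_i\xi_i^{(k)})\le s_{k},\quad \|C_i^\top\gamma_{k,\ell}-a_{\ell_i}(x_i,x_{-i})\|\le\lambda_i,\quad \gamma_{k,\ell}\ge0,$$ with $\lambda_i,s_k\in\mathbb{R}$, $\gamma_{k,\ell}\in\mathbb{R}^m$. If $(x^*,\lambda^*,s^*,\gamma^* )$ is a generalized Nash equilibrium of this problem, then $x^*$ is a DRNE of the game $\forall i:\ \min_{x_i\in X_i}\max_{\mathb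b{Q}_i\in\mathbb{B}_{\epsilon_i}(\hat{\mathbb{P}}_{K_i})}\mathbb{E}_{\mathbb{Q}_i}[h_i(x_i,x_{-i},\xi_i)]$.
   Context: Agents $i\in\mathcal{N}=\{1,\dots,N\}$ choose $x_i\in X_i\subseteq\mathbb{R}^n$, $X=\prod_iX_i$, $x_{-i}$ the others' decisions. $\|\cdot\|$ is the Euclidean norm; $\mathcal{M}(\Xi_i)$ = distributions on $\Xi_i$ with finite first moment; $d_W$ = 1-Wasserstein distance with transport cost $\|\xi-\xi'\|$. Agent $i$ has samples $\xi_i^{(1)},\dots,\xi_i^{(K_i)}\in\Xi_i$, empirical distribution $\hat{\mathbb{P}}_{K_i}=\frac1{K_i}\sum_k\delta_{\xi_i^{(k)}}$, radius $\epsilon_i\ge0$, and ambiguity set $\mathbb{B}_{\epsilon_i}(\hat{\mathbb{P}}_{K_i})=\{\mathbb{Q}\in\mathcal{M}(\Xi_i):d_W(\hat{\mathbb{P}}_{K_i},\mathbb{Q})\le\epsilon_i\}$. A DRNE is $x^*\in X$ with $x^*_i\in\arg\min_{x_i\in X_i}\max_{\mathbb{Q}_i\in\mathbb{B}_{\epsilon_i}(\hat{\mathbb{P}}_{K_i})}\mathbb{E}_{\mathbb{Q}_i}[h_i(x_i,x^*_{-i},\xi_i)]$ for all $i$. A generalized Nash equilibrium of the stated problem is a point at which each agent's block $(x_i^*,\lambda_i^*,s^*_i,\gamma^*_i)$ is feasible and optimal for agent $i$'s problem given $x^*_{-i}$. *)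

theory Defs
  imports "HOL-Probability.Probability"
begin

definition polytope :: "real^'p^'m \<Rightarrow> real^'m \<Rightarrow> (real^'p) set" where
  "polytope C d = {xi. \<forall>j. (C *v xi) $ j \<le> d $ j}"

definition distributions_fm :: "('a::euclidean_space) set \<Rightarrow> 'a measure set" where
  "distributions_fm Xi = {Q. prob_space Q \<and> sets Q = sets borel \<and>
      (AE xi in Q. xi \<in> Xi) \<and> integrable Q norm}"

definition coupling :: "('a::euclidean_space) measure \<Rightarrow> 'a measure \<Rightarrow> ('a \<times> 'a) measure \<Rightarrow> bool" where
  "coupling P Q \<pi> \<longleftrightarrow> prob_space \<pi> \<and> sets \<pi> = sets (borel \<Otimes>\<^sub>M borel) \<and>
      distr \<pi> borel fst = P \<and> distr \<pi> borel snd = Q"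

definition wasserstein1 :: "('a::euclidean_space) measure \<Rightarrow> 'a measure \<Rightarrow> ennreal" where
  "wasserstein1 P Q = (INF \<pi> \<in> {\<pi>. coupling P Q \<pi>}. \<integral>\<^sup>+ z. ennreal (norm (fst z - snd z)) \<partial>\<pi>)"

definition empirical :: "nat \<Rightarrow> (nat \<Rightarrow> 'a::euclidean_space) \<Rightarrow> 'a measure" where
  "empirical K xis = distr (measure_pmf (pmf_of_set {1..K})) borel xis"

definition wball :: "'a::euclidean_space set \<Rightarrow> real \<Rightarrow> 'a measure \<Rightarrow> 'a measure set" where
  "wball Xi \<epsilon> P = {Q \<in> distributions_fm Xi. wasserstein1 P Q \<le> ennreal \<epsilon>}"

text \<open>Worst-case expected cost (the "max" over the ambiguity set, taken as a supremum).\<close>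
definition worst_case :: "'a::euclidean_space measure set \<Rightarrow> ('a \<Rightarrow> real) \<Rightarrow> ereal" where
  "worst_case B h = (SUP Q \<in> B. ereal (\<integral> xi. h xi \<partial>Q))"

definition DRNE ::
  "('N \<Rightarrow> 'x set) \<Rightarrow> ('N \<Rightarrow> 'a::euclidean_space measure set) \<Rightarrow> ('N \<Rightarrow> ('N \<Rightarrow> 'x) \<Rightarrow> 'a \<Rightarrow> real)
     \<Rightarrow> ('N \<Rightarrow> 'x) \<Rightarrow> bool" where
  "DRNE X B h xs \<longleftrightarrow> (\<forall>i. xs i \<in> X i) \<and>
     (\<forall>i. \<forall>y \<in> X i. worst_case (B i) (h i xs) \<le> worst_case (B i) (h i (xs(i := y))))"

end

theory Submission
  imports Defs
begin

lemma cball_pair_sub: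
  fixes a :: "'a::real_normed_vector" and v :: real
  assumes "dist (a,v) (x,y) \<le> \<rho>"
  shows "norm (x - a) \<le> \<rho>" "\<bar>y - v\<bar> \<le> \<rho>"
proof -
  show "norm (x - a) \<le> \<rho>" using dist_fst_le[of "(a,v)" "(x,y)"] assms
    by (simp add: dist_norm norm_minus_commute)
  show "\<bar>y - v\<bar> \<le> \<rho>" using dist_snd_le[of "(a,v)" "(x,y)"] assms
    by (simp add: dist_norm abs_minus_commute)
qed

lemma mvm_uminus: "(C::real^'p^'m) *v (- x) = - (C *v x)"
  by (metis diff_0 matrix_vector_mult_0_right matrix_vector_mult_diff_distrib)

lemma inner_dual:
  fixes C :: "real^'p^'m" and e :: "real^'m" and a :: "real^'p"
  assumes e: "\<And>j. 0 \<le> e $ j" and lam: "0 \<le> lam" and eta: "0 < \<eta>"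
    and bound: "\<And>u. (\<forall>j. (C *v u) $ j \<le> e $ j) \<Longrightarrow> a \<bullet> u - lam * norm u \<le> v"
  shows "\<exists>\<gamma>. (\<forall>j. 0 \<le> \<gamma> $ j) \<and> norm (transpose C *v \<gamma> - a) \<le> lam + \<eta> \<and> \<gamma> \<bullet> e \<le> v + \<eta>"
proof (rule ccontr)
  assume nex: "\<not> ?thesis"
  define W where "W = {(transpose C *v \<gamma> + w, \<gamma> \<bullet> e + r) | \<gamma> w r. (\<forall>j. 0 \<le> \<gamma> $ j) \<and> norm w \<le> lam \<and> 0 \<le> r}"
  define S where "S = cball (a, v) \<eta>"
  have convW: "convex W"
    unfolding convex_alt
  proof (intro ballI allI impI)
    fix x y and u :: real assume x: "x \<in> W" and y: "y \<in> W" and u: "0 \<le> u \<and> u \<le> 1"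
    from x obtain g1 w1 r1 where 1: "x = (transpose C *v g1 + w1, g1 \<bullet> e + r1)" "\<forall>j. 0 \<le> g1 $ j" "norm w1 \<le> lam" "0 \<le> r1"
      unfolding W_def by blast
    from y obtain g2 w2 r2 where 2: "y = (transpose C *v g2 + w2, g2 \<bullet> e + r2)" "\<forall>j. 0 \<le> g2 $ j" "norm w2 \<le> lam" "0 \<le> r2"
      unfolding W_def by blast
    have "(1 - u) *\<^sub>R x + u *\<^sub>R y = (transpose C *v ((1-u) *\<^sub>R g1 + u *\<^sub>R g2) + ((1-u) *\<^sub>R w1 + u *\<^sub>R w2),
       ((1-u) *\<^sub>R g1 + u *\<^sub>R g2) \<bullet> e + ((1-u) * r1 + u * r2))"
      using 1 2 by (simp add: algebra_simps inner_add_left)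
    moreover have "\<forall>j. 0 \<le> ((1-u) *\<^sub>R g1 + u *\<^sub>R g2) $ j" using 1 2 u by simp
    moreover have "norm ((1-u) *\<^sub>R w1 + u *\<^sub>R w2) \<le> lam"
    proof -
      have "norm ((1-u) *\<^sub>R w1 + u *\<^sub>R w2) \<le> (1-u) * norm w1 + u * norm w2"
        using u by (metis (no_types) abs_of_nonneg diff_ge_0_iff_ge norm_scaleR norm_triangle_ineq)
      also have "\<dots> \<le> (1-u) * lam + u * lam"
        using u 1(3) 2(3) by (intro add_mono mult_left_mono) simp_all
      finally show ?thesis by (simp add: algebra_simps)
    qed
    moreover have "0 \<le> (1-u) * r1 + u * r2" using u 1 2 by simp
    ultimately show "(1 - u) *\<^sub>R x + u *\<^sub>R y \<in> W" unfolding W_def by blast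
  qed
  have disj: "S \<inter> W = {}"
  proof (rule ccontr)
    assume "S \<inter> W \<noteq> {}"
    then obtain x y where xy: "(x,y) \<in> S" "(x,y) \<in> W" by auto
    from xy(2) obtain g w r where g: "(x,y) = (transpose C *v g + w, g \<bullet> e + r)" "\<forall>j. 0 \<le> g $ j" "norm w \<le> lam" "0 \<le> r"
      unfolding W_def by blast
    from xy(1) have d: "norm (x - a) \<le> \<eta>" "\<bar>y - v\<bar> \<le> \<eta>"
      using cball_pair_sub unfolding S_def mem_cball by blast+
    have "norm (transpose C *v g - a) = norm (- w + (x - a))" using g by (simp add: algebra_simps)
    also have "\<dots> \<le> norm w + norm (x - a)" by (metis norm_minus_cancel norm_triangle_ineq)
    finally have "norm (transpose C *v g - a) \<le> lam + \<eta>" using d g by linarith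
    moreover have "g \<bullet> e \<le> v + \<eta>" using g d by auto
    ultimately show False using nex g(2) by blast
  qed
  have Wmem: "(transpose C *v g + w, g \<bullet> e + r) \<in> W" if "\<forall>j. 0 \<le> g $ j" "norm w \<le> lam" "0 \<le> r" for g w r
    unfolding W_def using that by blast
  have "S \<noteq> {}" using eta unfolding S_def by auto
  moreover have "W \<noteq> {}" using Wmem[of 0 0 0] lam by auto
  ultimately obtain nb b where nb: "nb \<noteq> 0" "\<forall>x\<in>S. inner nb x \<le> b" "\<forall>x\<in>W. inner nb x \<ge> b"
    using separating_hyperplane_sets[OF convex_cball convW, of "(a,v)" \<eta>] disj unfolding S_def by blast
  obtain n \<beta> where nbdef: "nb = (n, \<beta>)" by (cases nb)
  have "(a,v) + (\<eta> / norm nb) *\<^sub>R nb \<in> S" unfolding S_def using eta nb(1)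
    by (simp add: dist_norm)
  then have "inner nb ((a,v) + (\<eta> / norm nb) *\<^sub>R nb) \<le> b" using nb by blast
  then have "inner nb (a,v) + \<eta> * norm nb \<le> b"
    using nb(1) by (simp add: inner_add_right power2_norm_eq_inner[symmetric] power2_eq_square)
  then have sep1: "n \<bullet> a + \<beta> * v < b" using eta nb(1) nbdef
    by (smt (verit, ccfv_SIG) inner_Pair inner_real_def mult_pos_pos zero_less_norm_iff)
  have Wb: "b \<le> n \<bullet> (transpose C *v g + w) + \<beta> * (g \<bullet> e + r)"
    if "\<forall>j. 0 \<le> g $ j" "norm w \<le> lam" "0 \<le> r" for g w r
  proof -
    have "b \<le> inner nb (transpose C *v g + w, g \<bullet> e + r)" using nb(3) Wmem[OF that] by blast
    then show ?thesis using nbdef by simp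
  qed
  have b0: "b \<le> 0" using Wb[of 0 0 0] lam by simp
  have beta: "0 \<le> \<beta>"
  proof (rule ccontr)
    assume "\<not> 0 \<le> \<beta>"
    have "b \<le> \<beta> * ((\<bar>b\<bar> + 1) / - \<beta>)"
      using Wb[of 0 0 "(\<bar>b\<bar> + 1) / - \<beta>"] lam \<open>\<not> 0 \<le> \<beta>\<close> by (simp add: divide_nonneg_nonpos)
    also have "\<dots> = - (\<bar>b\<bar> + 1)" using \<open>\<not> 0 \<le> \<beta>\<close> by (simp add: field_simps)
    finally show False by linarith
  qed
  have Cn: "0 \<le> (C *v n + \<beta> *\<^sub>R e) $ j" for j
  proof (rule ccontr)
    assume neg: "\<not> 0 \<le> (C *v n + \<beta> *\<^sub>R e) $ j"
    define t where "t = (\<bar>b\<bar> + 1) / - ((C *v n + \<beta> *\<^sub>R e) $ j)"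
    have t: "0 \<le> t" using neg unfolding t_def by simp
    define g :: "real^'m" where "g = t *\<^sub>R axis j 1"
    have g0: "\<forall>j. 0 \<le> g $ j" using t unfolding g_def by (simp add: axis_def)
    have "b \<le> n \<bullet> (transpose C *v g + 0) + \<beta> * (g \<bullet> e + 0)"
      using Wb[OF g0, of 0 0] lam by simp
    also have "\<dots> = g \<bullet> (C *v n + \<beta> *\<^sub>R e)"
      by (simp add: inner_add_right dot_lmul_matrix[symmetric] inner_commute[of n])
    also have "\<dots> = t * (C *v n + \<beta> *\<^sub>R e) $ j" unfolding g_def by (simp add: inner_axis')
    also have "\<dots> = - (\<bar>b\<bar> + 1)" using neg unfolding t_def by (simp add: field_simps)
    finally show False by linarith
  qed
  have bn: "b \<le> - lam * norm n"
  proof (cases "n = 0")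
    case True then show ?thesis using b0 by simp
  next
    case False
    have "b \<le> n \<bullet> (transpose C *v 0 + (- (lam / norm n) *\<^sub>R n)) + \<beta> * (0 \<bullet> e + 0)"
      using Wb[of 0 "- (lam / norm n) *\<^sub>R n" 0] lam False by simp
    also have "\<dots> = - (lam / norm n) * (n \<bullet> n)" by simp
    also have "\<dots> = - lam * norm n" using False
      by (simp add: power2_norm_eq_inner[symmetric] power2_eq_square)
    finally show ?thesis .
  qed
  define u where "u = - n"
  have key: "a \<bullet> u - lam * norm u > \<beta> * v" using sep1 bn unfolding u_def
    by (simp add: inner_commute)
  have Cu: "(C *v u) $ j \<le> \<beta> * e $ j" for j
    using Cn[of j] unfolding u_def by (simp add: mvm_uminus)
  show False
  proof (cases "\<beta> = 0")
    case False
    then have bpos: "0 < \<beta>" using beta by simp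
    have "\<forall>j. (C *v ((1/\<beta>) *\<^sub>R u)) $ j \<le> e $ j"
      using Cu bpos by (simp add: matrix_vector_mult_scaleR field_simps)
    then have "a \<bullet> ((1/\<beta>) *\<^sub>R u) - lam * norm ((1/\<beta>) *\<^sub>R u) \<le> v" by (rule bound)
    then have "(1/\<beta>) * (a \<bullet> u - lam * norm u) \<le> v" using bpos by (simp add: algebra_simps)
    then have "a \<bullet> u - lam * norm u \<le> \<beta> * v" using bpos by (simp add: field_simps)
    then show False using key by linarith
  next
    case True
    define c0 where "c0 = a \<bullet> u - lam * norm u"
    have c0: "0 < c0" using key True unfolding c0_def by simp
    define t where "t = (\<bar>v\<bar> + 1) / c0"
    have t: "0 \<le> t" using c0 unfolding t_def by simp
    have "\<forall>j. (C *v (t *\<^sub>R u)) $ j \<le> e $ j"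
      using Cu True t e by (simp add: matrix_vector_mult_scaleR) (meson mult_nonneg_nonpos order.trans)
    then have "a \<bullet> (t *\<^sub>R u) - lam * norm (t *\<^sub>R u) \<le> v" by (rule bound)
    then have "t * c0 \<le> v" using t unfolding c0_def by (simp add: algebra_simps)
    moreover have "t * c0 = \<bar>v\<bar> + 1" using c0 unfolding t_def by simp
    ultimately show False by linarith
  qed
qed

lemma inner_nonneg_vec:
  fixes g x :: "real^'m"
  assumes "\<forall>j. 0 \<le> g $ j" "\<forall>j. 0 \<le> x $ j"
  shows "0 \<le> g \<bullet> x"
  using assms unfolding inner_vec_def by (auto intro!: sum_nonneg)

lemma pointwise_bound:
  fixes C :: "real^'p^'m" and a :: "nat \<Rightarrow> real^'p"
  assumes L: "0 < L" and z: "\<zeta> \<in> polytope C d"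
    and f: "\<forall>l\<in>{1..L}. b l + a l \<bullet> \<xi> + g l \<bullet> (d - C *v \<xi>) \<le> s \<and>
               norm (transpose C *v g l - a l) \<le> lam \<and> (\<forall>j. 0 \<le> g l $ j)"
  shows "Max ((\<lambda>l. a l \<bullet> \<zeta> + b l) ` {1..L}) \<le> s + lam * norm (\<zeta> - \<xi>)"
proof (subst Max_le_iff)
  show "finite ((\<lambda>l. a l \<bullet> \<zeta> + b l) ` {1..L})" by simp
  show "(\<lambda>l. a l \<bullet> \<zeta> + b l) ` {1..L} \<noteq> {}" using L by auto
  show "\<forall>y\<in>(\<lambda>l. a l \<bullet> \<zeta> + b l) ` {1..L}. y \<le> s + lam * norm (\<zeta> - \<xi>)"
  proof
    fix y assume "y \<in> (\<lambda>l. a l \<bullet> \<zeta> + b l) ` {1..L}"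
    then obtain l where l: "l \<in> {1..L}" "y = a l \<bullet> \<zeta> + b l" by auto
    have fl: "b l + a l \<bullet> \<xi> + g l \<bullet> (d - C *v \<xi>) \<le> s" "norm (transpose C *v g l - a l) \<le> lam"
      "\<forall>j. 0 \<le> g l $ j" using f l(1) by auto
    have "0 \<le> g l \<bullet> (d - C *v \<zeta>)"
      using z fl(3) unfolding polytope_def by (intro inner_nonneg_vec) auto
    have tr: "g l \<bullet> (C *v z) = (transpose C *v g l) \<bullet> z" for z
      by (simp add: dot_lmul_matrix)
    have "y \<le> a l \<bullet> \<zeta> + b l + g l \<bullet> (d - C *v \<zeta>)" using l \<open>0 \<le> g l \<bullet> (d - C *v \<zeta>)\<close> by simp
    also have "\<dots> = (b l + a l \<bullet> \<xi> + g l \<bullet> (d - C *v \<xi>)) + (a l - transpose C *v g l) \<bullet> (\<zeta> - \<xi>)"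
      by (simp add: inner_diff_right inner_diff_left matrix_vector_mult_diff_distrib tr)
    also have "\<dots> \<le> s + norm (a l - transpose C *v g l) * norm (\<zeta> - \<xi>)"
      using fl(1) norm_cauchy_schwarz[of "a l - transpose C *v g l" "\<zeta> - \<xi>"] by linarith
    also have "\<dots> \<le> s + lam * norm (\<zeta> - \<xi>)"
      using fl(2) by (simp add: mult_right_mono norm_minus_commute)
    finally show "y \<le> s + lam * norm (\<zeta> - \<xi>)" .
  qed
qed

lemma closed_polytope: "closed (polytope (C::real^'p^'m) d)"
proof -
  have "polytope C d = (\<Inter>j. {x. (C *v x) $ j \<le> d $ j})" unfolding polytope_def by auto
  moreover have "closed {x. (C *v x) $ j \<le> d $ j}" for j
  proof -
    have "{x. (C *v x) $ j \<le> d $ j} = {x. (\<Sum>i\<in>UNIV. C $ j $ i * x $ i) \<le> d $ j}"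
      by (simp add: matrix_vector_mult_def)
    also have "closed \<dots>"
      by (intro closed_Collect_le continuous_intros)
    finally show ?thesis .
  qed
  ultimately show ?thesis by auto
qed

lemma h_meas:
  fixes a :: "nat \<Rightarrow> 'a::euclidean_space"
  shows "(\<lambda>\<zeta>. Max ((\<lambda>l. a l \<bullet> \<zeta> + b l) ` {1..L})) \<in> borel_measurable borel"
  by (intro borel_measurable_Max) (auto intro!: borel_measurable_continuous_onI continuous_intros)

lemma h_bound:
  fixes a :: "nat \<Rightarrow> 'a::euclidean_space"
  assumes L: "0 < L"
  shows "\<bar>Max ((\<lambda>l. a l \<bullet> \<zeta> + b l) ` {1..L})\<bar> \<le> (\<Sum>l=1..L. \<bar>b l\<bar>) + (\<Sum>l=1..L. norm (a l)) * norm \<zeta>"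
proof -
  have "Max ((\<lambda>l. a l \<bullet> \<zeta> + b l) ` {1..L}) \<in> (\<lambda>l. a l \<bullet> \<zeta> + b l) ` {1..L}"
    using L by (intro Max_in) auto
  then obtain l where l: "l \<in> {1..L}" "Max ((\<lambda>l. a l \<bullet> \<zeta> + b l) ` {1..L}) = a l \<bullet> \<zeta> + b l" by auto
  have "\<bar>a l \<bullet> \<zeta> + b l\<bar> \<le> norm (a l) * norm \<zeta> + \<bar>b l\<bar>"
    using Cauchy_Schwarz_ineq2[of "a l" \<zeta>] by linarith
  also have "\<dots> \<le> (\<Sum>l=1..L. norm (a l)) * norm \<zeta> + (\<Sum>l=1..L. \<bar>b l\<bar>)"
    using l(1) by (intro add_mono mult_right_mono member_le_sum) auto
  finally show ?thesis using l by simp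
qed

lemma weak_duality:
  fixes C :: "real^'p^'m" and d :: "real^'m" and \<xi> :: "nat \<Rightarrow> real^'p"
    and a :: "nat \<Rightarrow> real^'p" and b :: "nat \<Rightarrow> real" and g :: "nat \<Rightarrow> nat \<Rightarrow> real^'m"
    and s :: "nat \<Rightarrow> real"
  assumes K: "0 < K" and L: "0 < L" and eps: "0 \<le> \<epsilon>"
    and samp: "\<And>k. k \<in> {1..K} \<Longrightarrow> \<xi> k \<in> polytope C d"
    and f: "\<forall>k\<in>{1..K}. \<forall>l\<in>{1..L}. b l + a l \<bullet> \<xi> k + g k l \<bullet> (d - C *v \<xi> k) \<le> s k \<and>
               norm (transpose C *v g k l - a l) \<le> lam \<and> (\<forall>j. 0 \<le> g k l $ j)"
  shows "worst_case (wball (polytope C d) \<epsilon> (empirical K \<xi>)) (\<lambda>\<zeta>. Max ((\<lambda>l. a l \<bullet> \<zeta> + b l) ` {1..L}))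
           \<le> ereal (lam * \<epsilon> + 1 / real K * (\<Sum>k = 1..K. s k))"
proof -
  define h where "h = (\<lambda>\<zeta>. Max ((\<lambda>l. a l \<bullet> \<zeta> + b l) ` {1..L}))"
  define P where "P = empirical K \<xi>"
  define Xi where "Xi = polytope C d"
  define U where "U = pmf_of_set {1..K}"
  have UK: "set_pmf U = {1..K}" unfolding U_def using K by simp
  have "norm (transpose C *v g 1 1 - a 1) \<le> lam" using f K L by auto
  then have lam0: "0 \<le> lam" using norm_ge_zero order.trans by blast
  have hmeas: "h \<in> borel_measurable borel" unfolding h_def by (rule h_meas)
  have Xi_sets: "Xi \<in> sets borel" unfolding Xi_def using closed_polytope by (rule borel_closed)
  define Sset where "Sset = \<xi> ` {1..K}"
  have Sfin: "finite Sset" unfolding Sset_def by simp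
  have S_sets: "Sset \<in> sets borel" using Sfin by (intro borel_closed finite_imp_closed)
  define m where "m = (\<lambda>y. Min (s ` {k\<in>{1..K}. \<xi> k = y}))"
  define G where "G = (\<lambda>x. \<Sum>y\<in>Sset. m y * indicator {y} x)"
  have Gmeas: "G \<in> borel_measurable borel" unfolding G_def
    by (intro borel_measurable_sum borel_measurable_times borel_measurable_const borel_measurable_indicator) auto
  have G_at: "G x = m x" if "x \<in> Sset" for x
  proof -
    have "G x = (\<Sum>y\<in>Sset. if y = x then m x else 0)" unfolding G_def
      by (intro sum.cong) (auto simp: indicator_def)
    also have "\<dots> = m x" using that Sfin by simp
    finally show ?thesis .
  qed
  have m_le: "m (\<xi> k) \<le> s k" if "k \<in> {1..K}" for k
    unfolding m_def using that by (intro Min_le) auto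
  have m_in: "\<exists>k\<in>{1..K}. \<xi> k = \<xi> k0 \<and> m (\<xi> k0) = s k" if "k0 \<in> {1..K}" for k0
  proof -
    have "m (\<xi> k0) \<in> s ` {k\<in>{1..K}. \<xi> k = \<xi> k0}" unfolding m_def using that by (intro Min_in) auto
    then show ?thesis by auto
  qed
  have Pdef: "P = distr (measure_pmf U) borel \<xi>" unfolding P_def U_def empirical_def ..
  have intP_G: "integral\<^sup>L P G \<le> 1 / real K * (\<Sum>k = 1..K. s k)"
  proof -
    have "integral\<^sup>L P G = integral\<^sup>L (measure_pmf U) (\<lambda>k. G (\<xi> k))"
      unfolding Pdef by (rule integral_distr) (simp_all add: Gmeas)
    also have "\<dots> = (\<Sum>k = 1..K. G (\<xi> k)) / real K"
      unfolding U_def using K by (subst integral_pmf_of_set) auto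
    also have "\<dots> \<le> (\<Sum>k = 1..K. s k) / real K"
      using K G_at m_le unfolding Sset_def by (intro divide_right_mono sum_mono) auto
    finally show ?thesis by simp
  qed
  have intG_P: "integrable P G"
    unfolding Pdef by (subst integrable_distr_eq) (auto simp: Gmeas UK intro!: integrable_measure_pmf_finite)
  have AE_P: "AE x in P. x \<in> Sset"
    unfolding Pdef by (subst AE_distr_iff) (use S_sets in \<open>auto simp: AE_measure_pmf_iff UK Sset_def\<close>)
  have main: "integral\<^sup>L Q h \<le> 1 / real K * (\<Sum>k = 1..K. s k) + lam * (\<epsilon> + \<delta>)"
    if Q: "Q \<in> wball Xi \<epsilon> P" and \<delta>: "0 < \<delta>" for Q \<delta>
  proof -
    have Qd: "prob_space Q" "sets Q = sets borel" "AE \<zeta> in Q. \<zeta> \<in> Xi" "integrable Q norm"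
      using Q unfolding wball_def distributions_fm_def by auto
    have "wasserstein1 P Q \<le> ennreal \<epsilon>" using Q unfolding wball_def by simp
    also have "\<dots> < ennreal (\<epsilon> + \<delta>)" using eps \<delta> by (simp add: ennreal_less_iff)
    finally have "wasserstein1 P Q < ennreal (\<epsilon> + \<delta>)" .
    then obtain \<pi> where cp: "coupling P Q \<pi>" and nn: "(\<integral>\<^sup>+ z. ennreal (norm (fst z - snd z)) \<partial>\<pi>) < ennreal (\<epsilon> + \<delta>)"
      unfolding wasserstein1_def INF_less_iff by auto
    have pi: "prob_space \<pi>" "sets \<pi> = sets (borel \<Otimes>\<^sub>M borel)" "distr \<pi> borel fst = P" "distr \<pi> borel snd = Q"
      using cp unfolding coupling_def by auto
    have mfst: "fst \<in> measurable \<pi> borel"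
      using measurable_cong_sets[OF pi(2) refl] measurable_fst by blast
    have msnd: "snd \<in> measurable \<pi> borel"
      using measurable_cong_sets[OF pi(2) refl] measurable_snd by blast
    have mnf: "(\<lambda>z. norm (fst z - snd z)) \<in> borel_measurable \<pi>"
      using measurable_compose[OF borel_measurable_diff[OF mfst msnd] borel_measurable_norm] by simp
    have int_nf: "integrable \<pi> (\<lambda>z. norm (fst z - snd z))"
      by (rule integrableI_bounded) (use mnf nn in \<open>auto simp: order.strict_trans[OF _ ennreal_less_top]\<close>)
    have "ennreal (integral\<^sup>L \<pi> (\<lambda>z. norm (fst z - snd z))) < ennreal (\<epsilon> + \<delta>)"
      using nn nn_integral_eq_integral[OF int_nf] by simp
    then have nf_le: "integral\<^sup>L \<pi> (\<lambda>z. norm (fst z - snd z)) < \<epsilon> + \<delta>"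
      by (subst (asm) ennreal_less_iff) auto
    have int_hQ: "integrable Q h"
    proof (rule Bochner_Integration.integrable_bound)
      interpret Qp: prob_space Q by (rule Qd(1))
      show "integrable Q (\<lambda>\<zeta>. (\<Sum>l=1..L. \<bar>b l\<bar>) + (\<Sum>l=1..L. norm (a l)) * norm \<zeta>)"
        using Qd(4) by (intro Bochner_Integration.integrable_add integrable_mult_right) auto
      show "h \<in> borel_measurable Q" using measurable_cong_sets[OF Qd(2) refl] hmeas by blast
      show "AE x in Q. norm (h x) \<le> norm ((\<Sum>l=1..L. \<bar>b l\<bar>) + (\<Sum>l=1..L. norm (a l)) * norm x)"
      proof (rule AE_I2)
        fix x :: "real^'p"
        have "0 \<le> (\<Sum>l=1..L. \<bar>b l\<bar>) + (\<Sum>l=1..L. norm (a l)) * norm x"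
          by (intro add_nonneg_nonneg mult_nonneg_nonneg sum_nonneg) auto
        then show "norm (h x) \<le> norm ((\<Sum>l=1..L. \<bar>b l\<bar>) + (\<Sum>l=1..L. norm (a l)) * norm x)"
          using h_bound[OF L, of a x b] unfolding h_def by simp
      qed
    qed
    have int_h: "integrable \<pi> (\<lambda>z. h (snd z))"
      using int_hQ pi(4) integrable_distr_eq[OF msnd hmeas] by simp
    have int_G: "integrable \<pi> (\<lambda>z. G (fst z))"
      using intG_P pi(3) integrable_distr_eq[OF mfst Gmeas] by simp
    have AE1: "AE z in \<pi>. fst z \<in> Sset"
    proof -
      have "AE x in distr \<pi> borel fst. x \<in> Sset" unfolding pi(3) by (rule AE_P)
      then show ?thesis by (subst (asm) AE_distr_iff[OF mfst]) (use S_sets in auto)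
    qed
    have AE2: "AE z in \<pi>. snd z \<in> Xi"
    proof -
      have "AE x in distr \<pi> borel snd. x \<in> Xi" unfolding pi(4) by (rule Qd(3))
      then show ?thesis by (subst (asm) AE_distr_iff[OF msnd]) (use Xi_sets in auto)
    qed
    have AEb: "AE z in \<pi>. h (snd z) \<le> G (fst z) + lam * norm (fst z - snd z)"
      using AE1 AE2
    proof eventually_elim
      case (elim z)
      then obtain k0 where k0: "k0 \<in> {1..K}" "fst z = \<xi> k0" unfolding Sset_def by auto
      then obtain k where k: "k \<in> {1..K}" "\<xi> k = \<xi> k0" "m (\<xi> k0) = s k" using m_in by blast
      have "h (snd z) \<le> s k + lam * norm (snd z - \<xi> k)"
        unfolding h_def
        by (rule pointwise_bound[OF L, where g = "g k"]) (use elim f k(1) in \<open>auto simp: Xi_def\<close>)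
      then show ?case using k k0 G_at elim(1) by (simp add: norm_minus_commute)
    qed
    have "integral\<^sup>L Q h = integral\<^sup>L \<pi> (\<lambda>z. h (snd z))"
      using integral_distr[OF msnd hmeas] pi(4) by simp
    also have "\<dots> \<le> integral\<^sup>L \<pi> (\<lambda>z. G (fst z) + lam * norm (fst z - snd z))"
      by (rule integral_mono_AE[OF int_h _ AEb]) (use int_G int_nf in auto)
    also have "\<dots> = integral\<^sup>L \<pi> (\<lambda>z. G (fst z)) + lam * integral\<^sup>L \<pi> (\<lambda>z. norm (fst z - snd z))"
      using int_G int_nf by simp
    also have "integral\<^sup>L \<pi> (\<lambda>z. G (fst z)) = integral\<^sup>L P G"
      using integral_distr[OF mfst Gmeas] pi(3) by simp
    finally have "integral\<^sup>L Q h \<le> integral\<^sup>L P G + lam * integral\<^sup>L \<pi> (\<lambda>z. norm (fst z - snd z))" .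
    moreover have "lam * integral\<^sup>L \<pi> (\<lambda>z. norm (fst z - snd z)) \<le> lam * (\<epsilon> + \<delta>)"
      using nf_le lam0 by (intro mult_left_mono) auto
    ultimately show ?thesis using intP_G by linarith
  qed
  show ?thesis
    unfolding worst_case_def
  proof (rule SUP_least)
    fix Q assume Q: "Q \<in> wball (polytope C d) \<epsilon> (empirical K \<xi>)"
    have "integral\<^sup>L Q h \<le> 1 / real K * (\<Sum>k = 1..K. s k) + lam * \<epsilon>"
    proof (rule field_le_epsilon)
      fix e :: real assume e: "0 < e"
      have "integral\<^sup>L Q h \<le> 1 / real K * (\<Sum>k = 1..K. s k) + lam * (\<epsilon> + e / (lam + 1))"
        using main[of Q "e / (lam + 1)"] Q e lam0 unfolding Xi_def P_def by simp
      also have "lam * (e / (lam + 1)) \<le> e" using lam0 e by (simp add: field_simps)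
      then have "1 / real K * (\<Sum>k = 1..K. s k) + lam * (\<epsilon> + e / (lam + 1)) \<le> 1 / real K * (\<Sum>k = 1..K. s k) + lam * \<epsilon> + e"
        by (simp add: distrib_left)
      finally show "integral\<^sup>L Q h \<le> 1 / real K * (\<Sum>k = 1..K. s k) + lam * \<epsilon> + e" .
    qed
    then show "ereal (integral\<^sup>L Q (\<lambda>\<zeta>. Max ((\<lambda>l. a l \<bullet> \<zeta> + b l) ` {1..L}))) \<le> ereal (lam * \<epsilon> + 1 / real K * (\<Sum>k = 1..K. s k))"
      unfolding h_def by simp
  qed
qed

lemma distr_pmf_eq:
  "distr (measure_pmf p) borel f = distr (measure_pmf (map_pmf f p)) borel (\<lambda>x. x)"
proof -
  have "distr (measure_pmf (map_pmf f p)) borel (\<lambda>x. x) = distr (distr (measure_pmf p) (count_space UNIV) f) borel (\<lambda>x. x)"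
    by (simp add: map_pmf_rep_eq)
  also have "\<dots> = distr (measure_pmf p) borel ((\<lambda>x. x) \<circ> f)"
    by (rule distr_distr) simp_all
  finally show ?thesis by (simp add: o_def)
qed

lemma pmf_in_ball:
  fixes \<pi> :: "((real^'p) \<times> (real^'p)) pmf" and C :: "real^'p^'m"
  assumes fin: "finite (set_pmf \<pi>)"
    and marg: "map_pmf fst \<pi> = map_pmf \<xi> (pmf_of_set {1..K})"
    and supp: "\<forall>z\<in>set_pmf \<pi>. snd z \<in> polytope C d"
    and cost: "measure_pmf.expectation \<pi> (\<lambda>z. norm (fst z - snd z)) \<le> \<epsilon>"
  shows "distr (measure_pmf \<pi>) borel snd \<in> wball (polytope C d) \<epsilon> (empirical K \<xi>)"
proof -
  define Q where "Q = distr (measure_pmf \<pi>) borel snd"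
  have Xi_sets: "polytope C d \<in> sets borel" using closed_polytope by (rule borel_closed)
  have "prob_space Q" unfolding Q_def by (rule measure_pmf.prob_space_distr) simp
  moreover have "sets Q = sets borel" unfolding Q_def by simp
  moreover have "AE x in Q. x \<in> polytope C d"
    unfolding Q_def by (subst AE_distr_iff) (use Xi_sets supp in \<open>auto simp: AE_measure_pmf_iff\<close>)
  moreover have "integrable Q norm"
    unfolding Q_def by (subst integrable_distr_eq) (auto intro!: integrable_measure_pmf_finite fin)
  ultimately have Qd: "Q \<in> distributions_fm (polytope C d)" unfolding distributions_fm_def by blast
  define \<pi>' where "\<pi>' = distr (measure_pmf \<pi>) (borel \<Otimes>\<^sub>M borel) (\<lambda>z. z)"
  have cp: "coupling (empirical K \<xi>) Q \<pi>'"
    unfolding coupling_def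
  proof (intro conjI)
    show "prob_space \<pi>'" unfolding \<pi>'_def by (rule measure_pmf.prob_space_distr) (simp add: space_pair_measure)
    show "sets \<pi>' = sets (borel \<Otimes>\<^sub>M borel)" unfolding \<pi>'_def by simp
    have d1: "distr \<pi>' borel fst = distr (measure_pmf \<pi>) borel fst"
      unfolding \<pi>'_def by (subst distr_distr) (auto simp: o_def space_pair_measure)
    have d2: "distr \<pi>' borel snd = distr (measure_pmf \<pi>) borel snd"
      unfolding \<pi>'_def by (subst distr_distr) (auto simp: o_def space_pair_measure)
    show "distr \<pi>' borel fst = empirical K \<xi>"
      unfolding d1 empirical_def by (subst (1 2) distr_pmf_eq) (simp add: marg)
    show "distr \<pi>' borel snd = Q" unfolding d2 Q_def ..
  qed
  have int: "integrable (measure_pmf \<pi>) (\<lambda>z. norm (fst z - snd z))"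
    by (rule integrable_measure_pmf_finite[OF fin])
  have "(\<integral>\<^sup>+ z. ennreal (norm (fst z - snd z)) \<partial>\<pi>') = (\<integral>\<^sup>+ z. ennreal (norm (fst z - snd z)) \<partial>measure_pmf \<pi>)"
    unfolding \<pi>'_def by (subst nn_integral_distr) (auto simp: space_pair_measure)
  also have "\<dots> = ennreal (measure_pmf.expectation \<pi> (\<lambda>z. norm (fst z - snd z)))"
    by (rule nn_integral_eq_integral[OF int]) simp
  also have "\<dots> \<le> ennreal \<epsilon>" using cost by (rule ennreal_leI)
  finally have "wasserstein1 (empirical K \<xi>) Q \<le> ennreal \<epsilon>"
    unfolding wasserstein1_def using cp by (meson INF_lower2 mem_Collect_eq)
  then show ?thesis using Qd unfolding wball_def Q_def by blast
qed

lemma mix_pmf_facts: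
  fixes p q :: "'a pmf" and \<theta> :: real
  assumes th: "0 \<le> \<theta>" "\<theta> \<le> 1" and fp: "finite (set_pmf p)" and fq: "finite (set_pmf q)"
  defines "r \<equiv> bind_pmf (bernoulli_pmf \<theta>) (\<lambda>b. if b then p else q)"
  shows "set_pmf r \<subseteq> set_pmf p \<union> set_pmf q"
    and "map_pmf f p = map_pmf f q \<Longrightarrow> map_pmf f r = map_pmf f p"
    and "measure_pmf.expectation r (g :: 'a \<Rightarrow> real) = \<theta> * measure_pmf.expectation p g + (1 - \<theta>) * measure_pmf.expectation q g"
proof -
  show sub: "set_pmf r \<subseteq> set_pmf p \<union> set_pmf q" unfolding r_def by (auto split: if_splits)
  show "map_pmf f p = map_pmf f q \<Longrightarrow> map_pmf f r = map_pmf f p"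
    unfolding r_def map_bind_pmf by (simp add: if_distrib cong: if_cong)
  define A where "A = set_pmf p \<union> set_pmf q"
  have fA: "finite A" unfolding A_def using fp fq by simp
  have pr: "pmf r x = \<theta> * pmf p x + (1 - \<theta>) * pmf q x" for x
    unfolding r_def pmf_bind using th by simp
  have "measure_pmf.expectation r g = (\<Sum>a\<in>A. pmf r a *\<^sub>R g a)"
    by (rule integral_measure_pmf[OF fA]) (use sub in \<open>auto simp: A_def\<close>)
  also have "\<dots> = (\<Sum>a\<in>A. \<theta> * (pmf p a *\<^sub>R g a) + (1 - \<theta>) * (pmf q a *\<^sub>R g a))"
    by (intro sum.cong refl) (simp add: pr algebra_simps)
  also have "\<dots> = \<theta> * (\<Sum>a\<in>A. pmf p a *\<^sub>R g a) + (1 - \<theta>) * (\<Sum>a\<in>A. pmf q a *\<^sub>R g a)"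
    by (simp add: sum.distrib sum_distrib_left)
  also have "(\<Sum>a\<in>A. pmf p a *\<^sub>R g a) = measure_pmf.expectation p g"
    by (rule integral_measure_pmf[OF fA, symmetric]) (auto simp: A_def)
  also have "(\<Sum>a\<in>A. pmf q a *\<^sub>R g a) = measure_pmf.expectation q g"
    by (rule integral_measure_pmf[OF fA, symmetric]) (auto simp: A_def)
  finally show "measure_pmf.expectation r g = \<theta> * measure_pmf.expectation p g + (1 - \<theta>) * measure_pmf.expectation q g" .
qed

definition goodpmf :: "nat \<Rightarrow> (nat \<Rightarrow> real^'p) \<Rightarrow> (real^'p) set \<Rightarrow> ((real^'p) \<times> (real^'p)) pmf \<Rightarrow> bool" where
  "goodpmf K \<xi> Xi \<pi> \<longleftrightarrow> finite (set_pmf \<pi>) \<and> map_pmf fst \<pi> = map_pmf \<xi> (pmf_of_set {1..K}) \<and>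
      (\<forall>z\<in>set_pmf \<pi>. snd z \<in> Xi)"

definition Aset :: "nat \<Rightarrow> (nat \<Rightarrow> real^'p) \<Rightarrow> (real^'p) set \<Rightarrow> (real^'p \<Rightarrow> real) \<Rightarrow> (real \<times> real) set" where
  "Aset K \<xi> Xi h = {(measure_pmf.expectation \<pi> (\<lambda>z. norm (fst z - snd z)), measure_pmf.expectation \<pi> (\<lambda>z. h (snd z))) | \<pi>. goodpmf K \<xi> Xi \<pi>}"

lemma convex_Aset: "convex (Aset K \<xi> Xi h)"
  unfolding convex_alt
proof (intro ballI allI impI)
  fix x y and u :: real
  assume x: "x \<in> Aset K \<xi> Xi h" and y: "y \<in> Aset K \<xi> Xi h" and u: "0 \<le> u \<and> u \<le> 1"
  from x obtain p where p: "goodpmf K \<xi> Xi p"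
    "x = (measure_pmf.expectation p (\<lambda>z. norm (fst z - snd z)), measure_pmf.expectation p (\<lambda>z. h (snd z)))"
    unfolding Aset_def by blast
  from y obtain q where q: "goodpmf K \<xi> Xi q"
    "y = (measure_pmf.expectation q (\<lambda>z. norm (fst z - snd z)), measure_pmf.expectation q (\<lambda>z. h (snd z)))"
    unfolding Aset_def by blast
  define r where "r = bind_pmf (bernoulli_pmf (1 - u)) (\<lambda>b. if b then p else q)"
  have th: "0 \<le> 1 - u" "1 - u \<le> 1" using u by auto
  have fp: "finite (set_pmf p)" and fq: "finite (set_pmf q)" using p q unfolding goodpmf_def by auto
  note mf = mix_pmf_facts[OF th fp fq, folded r_def]
  have "goodpmf K \<xi> Xi r"
    unfolding goodpmf_def
  proof (intro conjI)
    show "finite (set_pmf r)" using mf(1) fp fq finite_subset by blast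
    show "map_pmf fst r = map_pmf \<xi> (pmf_of_set {1..K})"
      using mf(2)[of fst] p(1) q(1) unfolding goodpmf_def by simp
    show "\<forall>z\<in>set_pmf r. snd z \<in> Xi" using mf(1) p(1) q(1) unfolding goodpmf_def by blast
  qed
  moreover have "(1 - u) *\<^sub>R x + u *\<^sub>R y = (measure_pmf.expectation r (\<lambda>z. norm (fst z - snd z)), measure_pmf.expectation r (\<lambda>z. h (snd z)))"
    unfolding mf(3) p(2) q(2) by simp
  ultimately show "(1 - u) *\<^sub>R x + u *\<^sub>R y \<in> Aset K \<xi> Xi h" unfolding Aset_def by blast
qed

lemma prod_point_in_Aset:
  assumes K: "0 < K" and z: "\<And>k. k \<in> {1..K} \<Longrightarrow> \<zeta> k \<in> Xi"
  shows "((\<Sum>k=1..K. norm (\<xi> k - \<zeta> k)) / real K, (\<Sum>k=1..K. h (\<zeta> k)) / real K) \<in> Aset K \<xi> Xi h"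
proof -
  define \<pi> where "\<pi> = map_pmf (\<lambda>k. (\<xi> k, \<zeta> k)) (pmf_of_set {1..K})"
  have g: "goodpmf K \<xi> Xi \<pi>" unfolding goodpmf_def \<pi>_def using K z by (auto simp: pmf.map_comp o_def)
  have e1: "measure_pmf.expectation \<pi> (\<lambda>z. norm (fst z - snd z)) = (\<Sum>k=1..K. norm (\<xi> k - \<zeta> k)) / real K"
    unfolding \<pi>_def using K by (simp add: integral_pmf_of_set)
  have e2: "measure_pmf.expectation \<pi> (\<lambda>z. h (snd z)) = (\<Sum>k=1..K. h (\<zeta> k)) / real K"
    unfolding \<pi>_def using K by (simp add: integral_pmf_of_set)
  show ?thesis unfolding Aset_def mem_Collect_eq
    by (rule exI[of _ \<pi>]) (simp add: g e1 e2)
qed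

lemma Aset_bound:
  fixes C :: "real^'p^'m" and a :: "nat \<Rightarrow> real^'p" and b :: "nat \<Rightarrow> real" and L :: nat
  defines "h \<equiv> (\<lambda>\<zeta>. Max ((\<lambda>l. a l \<bullet> \<zeta> + b l) ` {1..L}))"
  assumes cv: "(c, v) \<in> Aset K \<xi> (polytope C d) h" and ce: "c \<le> \<epsilon>"
  shows "ereal v \<le> worst_case (wball (polytope C d) \<epsilon> (empirical K \<xi>)) h"
proof -
  from cv obtain \<pi> where p: "goodpmf K \<xi> (polytope C d) \<pi>"
    "c = measure_pmf.expectation \<pi> (\<lambda>z. norm (fst z - snd z))" "v = measure_pmf.expectation \<pi> (\<lambda>z. h (snd z))"
    unfolding Aset_def by blast
  have Q: "distr (measure_pmf \<pi>) borel snd \<in> wball (polytope C d) \<epsilon> (empirical K \<xi>)"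
    using p ce unfolding goodpmf_def by (intro pmf_in_ball) auto
  have "integral\<^sup>L (distr (measure_pmf \<pi>) borel snd) h = v"
    unfolding p(3) h_def by (subst integral_distr) (auto intro: h_meas)
  then show ?thesis unfolding worst_case_def using Q by (metis SUP_upper)
qed

lemma sep2d:
  fixes A :: "(real \<times> real) set"
  assumes cA: "convex A" and A0: "(0, v0) \<in> A" and eps: "0 < \<epsilon>"
    and AB: "\<And>c v. (c, v) \<in> A \<Longrightarrow> c \<le> \<epsilon> \<Longrightarrow> v < w'"
  shows "\<exists>\<mu> \<tau>. 0 \<le> \<mu> \<and> (\<forall>c v. (c, v) \<in> A \<longrightarrow> v - \<mu> * c \<le> \<tau>) \<and> \<tau> \<le> w' - \<mu> * \<epsilon>"
proof -
  define B where "B = {..\<epsilon>} \<times> {w'..}"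
  have cB: "convex B" unfolding B_def by (intro convex_Times) auto
  have disj: "A \<inter> B = {}"
  proof (rule ccontr)
    assume "A \<inter> B \<noteq> {}"
    then obtain c v where "(c, v) \<in> A" "(c, v) \<in> B" by auto
    then show False using AB[of c v] unfolding B_def by auto
  qed
  have "A \<noteq> {}" using A0 by auto
  moreover have "B \<noteq> {}" unfolding B_def by auto
  ultimately obtain nb t where nb: "nb \<noteq> 0" "\<forall>x\<in>A. inner nb x \<le> t" "\<forall>x\<in>B. t \<le> inner nb x"
    using separating_hyperplane_sets[OF cA cB] disj by blast
  obtain \<alpha> \<beta> where ab: "nb = (\<alpha>, \<beta>)" by (cases nb)
  have hA: "\<alpha> * c + \<beta> * v \<le> t" if "(c, v) \<in> A" for c v using nb(2) that ab by fastforce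
  have hB: "t \<le> \<alpha> * c + \<beta> * v" if "c \<le> \<epsilon>" "w' \<le> v" for c v
    using nb(3) that ab unfolding B_def by fastforce
  define R where "R = \<bar>t\<bar> + \<bar>\<alpha> * \<epsilon>\<bar> + \<bar>\<beta> * w'\<bar> + 1"
  have R: "0 < R" unfolding R_def by simp
  have al: "\<alpha> \<le> 0"
  proof (rule ccontr)
    assume "\<not> \<alpha> \<le> 0"
    then have a0: "0 < \<alpha>" by simp
    have "t \<le> \<alpha> * (\<epsilon> - R / \<alpha>) + \<beta> * w'" using a0 R by (intro hB) auto
    also have "\<dots> = \<alpha> * \<epsilon> - R + \<beta> * w'" using a0 by (simp add: field_simps)
    finally show False unfolding R_def by linarith
  qed
  have be: "0 \<le> \<beta>"
  proof (rule ccontr)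
    assume "\<not> 0 \<le> \<beta>"
    then have b0: "\<beta> < 0" by simp
    have "t \<le> \<alpha> * \<epsilon> + \<beta> * (w' + R / (- \<beta>))" using b0 R by (intro hB) (auto simp: divide_pos_neg less_imp_le)
    also have "\<dots> = \<alpha> * \<epsilon> + \<beta> * w' - R" using b0 by (simp add: field_simps)
    finally show False unfolding R_def by linarith
  qed
  have bpos: "0 < \<beta>"
  proof (rule ccontr)
    assume "\<not> 0 < \<beta>"
    then have b0: "\<beta> = 0" using be by simp
    then have "\<alpha> \<noteq> 0" using nb(1) ab by (auto simp: zero_prod_def)
    then have "\<alpha> < 0" using al by simp
    have "0 \<le> t" using hA[OF A0] b0 by simp
    also have "t \<le> \<alpha> * \<epsilon>" using hB[of \<epsilon> w'] b0 by simp
    also have "\<alpha> * \<epsilon> < 0" using \<open>\<alpha> < 0\<close> eps by (simp add: mult_neg_pos)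
    finally show False by simp
  qed
  define \<mu> where "\<mu> = - \<alpha> / \<beta>"
  define \<tau> where "\<tau> = t / \<beta>"
  have "0 \<le> \<mu>" unfolding \<mu>_def using al bpos by (simp add: divide_nonpos_pos)
  moreover have "\<forall>c v. (c, v) \<in> A \<longrightarrow> v - \<mu> * c \<le> \<tau>"
  proof (intro allI impI)
    fix c v assume "(c, v) \<in> A"
    then have h: "\<alpha> * c + \<beta> * v \<le> t" by (rule hA)
    have eq: "v - \<mu> * c = (\<alpha> * c + \<beta> * v) / \<beta>" unfolding \<mu>_def using bpos by (simp add: field_simps)
    show "v - \<mu> * c \<le> \<tau>" unfolding eq \<tau>_def using divide_right_mono[OF h less_imp_le[OF bpos]] .
  qed
  moreover have "\<tau> \<le> w' - \<mu> * \<epsilon>"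
  proof -
    have h: "t \<le> \<alpha> * \<epsilon> + \<beta> * w'" using hB[of \<epsilon> w'] by simp
    have eq: "w' - \<mu> * \<epsilon> = (\<alpha> * \<epsilon> + \<beta> * w') / \<beta>" unfolding \<mu>_def using bpos by (simp add: field_simps)
    show ?thesis unfolding eq \<tau>_def using divide_right_mono[OF h less_imp_le[OF bpos]] .
  qed
  ultimately show ?thesis by blast
qed

lemma sum_sup:
  fixes f :: "nat \<Rightarrow> 'a \<Rightarrow> real"
  assumes K: "0 < K" and base: "\<And>k. k \<in> {1..K} \<Longrightarrow> \<xi> k \<in> Xi"
    and H: "\<And>\<zeta>. (\<And>k. k \<in> {1..K} \<Longrightarrow> \<zeta> k \<in> Xi) \<Longrightarrow> (\<Sum>k=1..K. f k (\<zeta> k)) \<le> R"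
  shows "\<exists>s. (\<forall>k\<in>{1..K}. \<forall>z\<in>Xi. f k z \<le> s k) \<and> (\<Sum>k=1..K. s k) \<le> R"
proof -
  have bdd: "bdd_above (f k ` Xi)" if k: "k \<in> {1..K}" for k
  proof (rule bdd_aboveI2)
    fix z assume z: "z \<in> Xi"
    have "(\<Sum>j=1..K. f j ((\<xi>(k := z)) j)) \<le> R" using base z by (intro H) auto
    moreover have "(\<Sum>j=1..K. f j ((\<xi>(k := z)) j)) = f k z + (\<Sum>j\<in>{1..K} - {k}. f j (\<xi> j))"
      using k by (subst sum.remove[of _ k]) (auto intro!: sum.cong)
    ultimately show "f k z \<le> R - (\<Sum>j\<in>{1..K} - {k}. f j (\<xi> j))" by simp
  qed
  have ne: "Xi \<noteq> {}" using base[of 1] K by auto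
  define s where "s = (\<lambda>k. SUP z\<in>Xi. f k z)"
  have up: "\<forall>k\<in>{1..K}. \<forall>z\<in>Xi. f k z \<le> s k"
    unfolding s_def using bdd by (auto intro: cSUP_upper)
  have "(\<Sum>k=1..K. s k) \<le> R"
  proof (rule field_le_epsilon)
    fix e :: real assume e: "0 < e"
    have "\<forall>k\<in>{1..K}. \<exists>z\<in>Xi. s k - e / K < f k z"
    proof
      fix k assume k: "k \<in> {1..K}"
      have "s k - e / K < s k" using e K by simp
      then show "\<exists>z\<in>Xi. s k - e / K < f k z" unfolding s_def using less_cSUP_iff[OF ne bdd[OF k]] by blast
    qed
    then obtain \<zeta> where \<zeta>: "\<forall>k\<in>{1..K}. \<zeta> k \<in> Xi \<and> s k - e / K < f k (\<zeta> k)" by metis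
    have "(\<Sum>k=1..K. s k - e / K) \<le> (\<Sum>k=1..K. f k (\<zeta> k))" using \<zeta> by (intro sum_mono) (auto intro: less_imp_le)
    also have "\<dots> \<le> R" using \<zeta> by (intro H) auto
    finally have "(\<Sum>k=1..K. s k) - e \<le> R" using K by (simp add: sum_subtractf)
    then show "(\<Sum>k=1..K. s k) \<le> R + e" by simp
  qed
  then show ?thesis using up by blast
qed

lemma strong_duality:
  fixes C :: "real^'p^'m" and d :: "real^'m" and \<xi> :: "nat \<Rightarrow> real^'p"
    and a :: "nat \<Rightarrow> real^'p" and b :: "nat \<Rightarrow> real"
  assumes K: "0 < K" and L: "0 < L" and eps: "0 \<le> \<epsilon>"
    and samp: "\<And>k. k \<in> {1..K} \<Longrightarrow> \<xi> k \<in> polytope C d"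
    and lt: "worst_case (wball (polytope C d) \<epsilon> (empirical K \<xi>)) (\<lambda>\<zeta>. Max ((\<lambda>l. a l \<bullet> \<zeta> + b l) ` {1..L})) < ereal w"
  shows "\<exists>lam s (g :: nat \<Rightarrow> nat \<Rightarrow> real^'m). (\<forall>k\<in>{1..K}. \<forall>l\<in>{1..L}. b l + a l \<bullet> \<xi> k + g k l \<bullet> (d - C *v \<xi> k) \<le> s k \<and>
               norm (transpose C *v g k l - a l) \<le> lam \<and> (\<forall>j. 0 \<le> g k l $ j)) \<and>
           lam * \<epsilon> + 1 / real K * (\<Sum>k = 1..K. s k) \<le> w"
proof -
  define h where "h = (\<lambda>\<zeta>. Max ((\<lambda>l. a l \<bullet> \<zeta> + b l) ` {1..L}))"
  define Xi where "Xi = polytope C d"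
  define WC where "WC = worst_case (wball Xi \<epsilon> (empirical K \<xi>)) h"
  have WCw: "WC < ereal w" using lt unfolding WC_def h_def Xi_def .
  define A where "A = Aset K \<xi> Xi h"
  have Abd: "ereal v \<le> WC" if "(c, v) \<in> A" "c \<le> \<epsilon>" for c v
    using Aset_bound[of c v K \<xi> C d a b L \<epsilon>] that unfolding A_def WC_def h_def Xi_def by blast
  have hge: "a l \<bullet> z + b l \<le> h z" if "l \<in> {1..L}" for l z
    unfolding h_def using that by (intro Max_ge) auto
  define v0 where "v0 = (\<Sum>k=1..K. h (\<xi> k)) / real K"
  have A0: "(0, v0) \<in> A"
    using prod_point_in_Aset[OF K, of \<xi> Xi \<xi> h] samp unfolding A_def v0_def Xi_def by simp
  show ?thesis
  proof (cases "\<epsilon> = 0")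
    case True
    define M where "M = (\<Sum>l=1..L. norm (a l))"
    have "ereal v0 < ereal w" using Abd[OF A0] True WCw by (meson order.trans not_le order.refl)
    then have v0w: "v0 < w" by simp
    have feas: "\<forall>k\<in>{1..K}. \<forall>l\<in>{1..L}. b l + a l \<bullet> \<xi> k + (0::real^'m) \<bullet> (d - C *v \<xi> k) \<le> h (\<xi> k) \<and>
               norm (transpose C *v 0 - a l) \<le> M \<and> (\<forall>j. 0 \<le> (0::real^'m) $ j)"
    proof (intro ballI conjI allI)
      fix k l assume l: "l \<in> {1..L}"
      show "b l + a l \<bullet> \<xi> k + (0::real^'m) \<bullet> (d - C *v \<xi> k) \<le> h (\<xi> k)" using hge[OF l, of "\<xi> k"] by (simp add: add.commute)
      show "norm (transpose C *v 0 - a l) \<le> M" unfolding M_def using l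
        by simp (rule member_le_sum, auto)
    qed simp
    have obj: "M * \<epsilon> + 1 / real K * (\<Sum>k = 1..K. h (\<xi> k)) \<le> w" using True v0w unfolding v0_def by simp
    show ?thesis
      by (rule exI[of _ M], rule exI[of _ "\<lambda>k. h (\<xi> k)"], rule exI[of _ "\<lambda>k l. 0::real^'m"])
         (rule conjI[OF feas obj])
  next
    case False
    then have epos: "0 < \<epsilon>" using eps by simp
    have cA: "convex A" unfolding A_def by (rule convex_Aset)
    obtain w' where w': "WC < ereal w'" "w' < w" using ereal_dense2[OF WCw] by auto
    have AB: "v < w'" if "(c, v) \<in> A" "c \<le> \<epsilon>" for c v
    proof -
      have "ereal v < ereal w'" using Abd[OF that] w'(1) by (rule le_less_trans)
      then show ?thesis by simp
    qed
    obtain \<mu> \<tau> where mt: "0 \<le> \<mu>" "\<forall>c v. (c, v) \<in> A \<longrightarrow> v - \<mu> * c \<le> \<tau>" "\<tau> \<le> w' - \<mu> * \<epsilon>"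
      using sep2d[of A v0 \<epsilon> w', OF cA A0 epos] AB by blast
    define f where "f = (\<lambda>k z. h z - \<mu> * norm (z - \<xi> k))"
    have H: "(\<Sum>k=1..K. f k (\<zeta> k)) \<le> real K * \<tau>" if z: "\<And>k. k \<in> {1..K} \<Longrightarrow> \<zeta> k \<in> Xi" for \<zeta>
    proof -
      have "((\<Sum>k=1..K. norm (\<xi> k - \<zeta> k)) / real K, (\<Sum>k=1..K. h (\<zeta> k)) / real K) \<in> A"
        unfolding A_def by (rule prod_point_in_Aset[OF K]) (rule z)
      then have "(\<Sum>k=1..K. h (\<zeta> k)) / real K - \<mu> * ((\<Sum>k=1..K. norm (\<xi> k - \<zeta> k)) / real K) \<le> \<tau>"
        using mt(2) by blast
      then have "((\<Sum>k=1..K. h (\<zeta> k)) - \<mu> * (\<Sum>k=1..K. norm (\<xi> k - \<zeta> k))) / real K \<le> \<tau>"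
        by (simp add: diff_divide_distrib)
      then have "(\<Sum>k=1..K. h (\<zeta> k)) - \<mu> * (\<Sum>k=1..K. norm (\<xi> k - \<zeta> k)) \<le> real K * \<tau>"
        using K by (simp add: divide_le_eq mult.commute)
      moreover have "(\<Sum>k=1..K. f k (\<zeta> k)) = (\<Sum>k=1..K. h (\<zeta> k)) - \<mu> * (\<Sum>k=1..K. norm (\<xi> k - \<zeta> k))"
      proof -
        have "(\<Sum>k=1..K. f k (\<zeta> k)) = (\<Sum>k=1..K. h (\<zeta> k) - \<mu> * norm (\<xi> k - \<zeta> k))"
          unfolding f_def by (intro sum.cong refl) (subst norm_minus_commute, rule refl)
        also have "\<dots> = (\<Sum>k=1..K. h (\<zeta> k)) - \<mu> * (\<Sum>k=1..K. norm (\<xi> k - \<zeta> k))"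
          by (simp add: sum_subtractf sum_distrib_left)
        finally show ?thesis .
      qed
      ultimately show ?thesis by simp
    qed
    obtain s where s: "\<forall>k\<in>{1..K}. \<forall>z\<in>Xi. f k z \<le> s k" "(\<Sum>k=1..K. s k) \<le> real K * \<tau>"
    proof -
      have sx: "\<xi> k \<in> Xi" if "k \<in> {1..K}" for k using samp[OF that] unfolding Xi_def .
      have "\<exists>s. (\<forall>k\<in>{1..K}. \<forall>z\<in>Xi. f k z \<le> s k) \<and> (\<Sum>k=1..K. s k) \<le> real K * \<tau>"
      proof (rule sum_sup[OF K])
        fix k assume "k \<in> {1..K}" then show "\<xi> k \<in> Xi" by (rule sx)
      next
        fix \<zeta> :: "nat \<Rightarrow> real^'p" assume "\<And>k. k \<in> {1..K} \<Longrightarrow> \<zeta> k \<in> Xi"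
        then show "(\<Sum>k=1..K. f k (\<zeta> k)) \<le> real K * \<tau>" by (rule H)
      qed
      then show ?thesis using that by blast
    qed
    define \<eta> where "\<eta> = (w - w') / (\<epsilon> + 1)"
    have eta: "0 < \<eta>" unfolding \<eta>_def using w'(2) eps by simp
    have ex: "\<forall>k\<in>{1..K}. \<forall>l\<in>{1..L}. \<exists>\<gamma>::real^'m. (\<forall>j. 0 \<le> \<gamma> $ j) \<and> norm (transpose C *v \<gamma> - a l) \<le> \<mu> + \<eta> \<and>
              \<gamma> \<bullet> (d - C *v \<xi> k) \<le> (s k - b l - a l \<bullet> \<xi> k) + \<eta>"
    proof (intro ballI)
      fix k l assume k: "k \<in> {1..K}" and l: "l \<in> {1..L}"
      show "\<exists>\<gamma>::real^'m. (\<forall>j. 0 \<le> \<gamma> $ j) \<and> norm (transpose C *v \<gamma> - a l) \<le> \<mu> + \<eta> \<and>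
              \<gamma> \<bullet> (d - C *v \<xi> k) \<le> (s k - b l - a l \<bullet> \<xi> k) + \<eta>"
      proof (rule inner_dual[OF _ mt(1) eta])
        show "0 \<le> (d - C *v \<xi> k) $ j" for j using samp[OF k] unfolding polytope_def by simp
        fix u assume u: "\<forall>j. (C *v u) $ j \<le> (d - C *v \<xi> k) $ j"
        have "(C *v (\<xi> k + u)) $ j \<le> d $ j" for j
          using u[rule_format, of j] by (simp add: matrix_vector_right_distrib)
        then have zin: "\<xi> k + u \<in> Xi" unfolding Xi_def polytope_def by blast
        have hz: "a l \<bullet> (\<xi> k + u) + b l \<le> h (\<xi> k + u)" by (rule hge[OF l])
        have "f k (\<xi> k + u) \<le> s k" using s(1) k zin by blast
        then have "h (\<xi> k + u) \<le> s k + \<mu> * norm u" unfolding f_def by simp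
        with hz show "a l \<bullet> u - \<mu> * norm u \<le> s k - b l - a l \<bullet> \<xi> k" by (simp add: inner_add_right)
      qed
    qed
    have "\<forall>k\<in>{1..K}. \<exists>gk. \<forall>l\<in>{1..L}. (\<forall>j. 0 \<le> gk l $ j) \<and> norm (transpose C *v gk l - a l) \<le> \<mu> + \<eta> \<and>
              gk l \<bullet> (d - C *v \<xi> k) \<le> (s k - b l - a l \<bullet> \<xi> k) + \<eta>"
    proof
      fix k assume k: "k \<in> {1..K}"
      show "\<exists>gk. \<forall>l\<in>{1..L}. (\<forall>j. 0 \<le> gk l $ j) \<and> norm (transpose C *v gk l - a l) \<le> \<mu> + \<eta> \<and>
              gk l \<bullet> (d - C *v \<xi> k) \<le> (s k - b l - a l \<bullet> \<xi> k) + \<eta>"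
        by (rule bchoice) (use ex k in blast)
    qed
    then have "\<exists>g. \<forall>k\<in>{1..K}. \<forall>l\<in>{1..L}. (\<forall>j. 0 \<le> g k l $ j) \<and> norm (transpose C *v g k l - a l) \<le> \<mu> + \<eta> \<and>
              g k l \<bullet> (d - C *v \<xi> k) \<le> (s k - b l - a l \<bullet> \<xi> k) + \<eta>"
      by (rule bchoice)
    then obtain g :: "nat \<Rightarrow> nat \<Rightarrow> real^'m" where
      g: "\<forall>k\<in>{1..K}. \<forall>l\<in>{1..L}. (\<forall>j. 0 \<le> g k l $ j) \<and> norm (transpose C *v g k l - a l) \<le> \<mu> + \<eta> \<and>
              g k l \<bullet> (d - C *v \<xi> k) \<le> (s k - b l - a l \<bullet> \<xi> k) + \<eta>"
      by blast
    have feas: "\<forall>k\<in>{1..K}. \<forall>l\<in>{1..L}. b l + a l \<bullet> \<xi> k + g k l \<bullet> (d - C *v \<xi> k) \<le> s k + \<eta> \<and>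
               norm (transpose C *v g k l - a l) \<le> \<mu> + \<eta> \<and> (\<forall>j. 0 \<le> g k l $ j)"
    proof (intro ballI conjI)
      fix k l assume k: "k \<in> {1..K}" and l: "l \<in> {1..L}"
      have gk: "(\<forall>j. 0 \<le> g k l $ j)" "norm (transpose C *v g k l - a l) \<le> \<mu> + \<eta>"
              "g k l \<bullet> (d - C *v \<xi> k) \<le> (s k - b l - a l \<bullet> \<xi> k) + \<eta>"
        using g k l by blast+
      show "b l + a l \<bullet> \<xi> k + g k l \<bullet> (d - C *v \<xi> k) \<le> s k + \<eta>" using gk(3) by linarith
      show "norm (transpose C *v g k l - a l) \<le> \<mu> + \<eta>" by (rule gk(2))
      show "\<forall>j. 0 \<le> g k l $ j" by (rule gk(1))
    qed
    have "(\<mu> + \<eta>) * \<epsilon> + 1 / real K * (\<Sum>k = 1..K. s k + \<eta>) = \<mu> * \<epsilon> + \<eta> * \<epsilon> + (\<Sum>k = 1..K. s k) / real K + \<eta>"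
      using K by (simp add: sum.distrib field_simps)
    also have "\<dots> \<le> \<mu> * \<epsilon> + \<eta> * \<epsilon> + \<tau> + \<eta>"
      using s(2) K by (simp add: divide_le_eq mult.commute)
    also have "\<dots> \<le> w' + \<eta> * (\<epsilon> + 1)" using mt(3) by (simp add: algebra_simps)
    also have "\<eta> * (\<epsilon> + 1) = w - w'" unfolding \<eta>_def using eps by simp
    finally have obj: "(\<mu> + \<eta>) * \<epsilon> + 1 / real K * (\<Sum>k = 1..K. s k + \<eta>) \<le> w" by simp
    show ?thesis
      by (rule exI[of _ "\<mu> + \<eta>"], rule exI[of _ "\<lambda>k. s k + \<eta>"], rule exI[of _ g])
         (rule conjI[OF feas obj])
  qed
qed

theorem proposition1:
  fixes X :: "'N::finite \<Rightarrow> (real^'n) set"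
    and C :: "'N \<Rightarrow> real^'p^'m" and d :: "'N \<Rightarrow> real^'m"
    and K :: "'N \<Rightarrow> nat" and xis :: "'N \<Rightarrow> nat \<Rightarrow> real^'p"
    and \<epsilon> :: "'N \<Rightarrow> real"
    and L :: "'N \<Rightarrow> nat"
    and a :: "'N \<Rightarrow> nat \<Rightarrow> ('N \<Rightarrow> real^'n) \<Rightarrow> real^'p"
    and b :: "'N \<Rightarrow> nat \<Rightarrow> ('N \<Rightarrow> real^'n) \<Rightarrow> real"
    and xstar :: "'N \<Rightarrow> real^'n"
    and lamstar :: "'N \<Rightarrow> real" and sstar :: "'N \<Rightarrow> nat \<Rightarrow> real"
    and gamstar :: "'N \<Rightarrow> nat \<Rightarrow> nat \<Rightarrow> real^'m"
  defines "Xi \<equiv> \<lambda>i. polytope (C i) (d i)"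
    and "h \<equiv> \<lambda>i x xi. Max ((\<lambda>l. a i l x \<bullet> xi + b i l x) ` {1..L i})"
    and "feas \<equiv> \<lambda>i (x :: 'N \<Rightarrow> real^'n) (lam :: real) (s :: nat \<Rightarrow> real) (gam :: nat \<Rightarrow> nat \<Rightarrow> real^'m).
           x i \<in> X i \<and>
           (\<forall>k \<in> {1..K i}. \<forall>l \<in> {1..L i}.
              b i l x + a i l x \<bullet> xis i k + gam k l \<bullet> (d i - C i *v xis i k) \<le> s k \<and>
              norm (transpose (C i) *v gam k l - a i l x) \<le> lam \<and>
              (\<forall>j. 0 \<le> gam k l $ j))"
    and "obj \<equiv> \<lambda>i (lam :: real) (s :: nat \<Rightarrow> real). lam * \<epsilon> i + (1 / real (K i)) * (\<Sum>k = 1..K i. s k)"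
  assumes K_pos: "\<And>i. 0 < K i"
    and L_pos: "\<And>i. 0 < L i"
    and eps_nonneg: "\<And>i. 0 \<le> \<epsilon> i"
    and samples: "\<And>i k. k \<in> {1..K i} \<Longrightarrow> xis i k \<in> Xi i"
    and GNE_feas: "\<And>i. feas i xstar (lamstar i) (sstar i) (gamstar i)"
    and GNE_opt: "\<And>i y lam s gam. feas i (xstar(i := y)) lam s gam \<Longrightarrow>
                     obj i (lamstar i) (sstar i) \<le> obj i lam s"
  shows "DRNE X (\<lambda>i. wball (Xi i) (\<epsilon> i) (empirical (K i) (xis i))) h xstar"
  proof -
  have hx: "\<And>i x. h i x = (\<lambda>\<zeta>. Max ((\<lambda>l. (\<lambda>l. a i l x) l \<bullet> \<zeta> + (\<lambda>l. b i l x) l) ` {1..L i}))"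
    unfolding h_def by simp
  show ?thesis
    unfolding DRNE_def
  proof (intro conjI allI ballI)
    fix i
    show "xstar i \<in> X i" using GNE_feas[of i] unfolding feas_def by simp
  next
    fix i y assume y: "y \<in> X i"
    define xy where "xy = xstar(i := y)"
    have samp: "\<And>k. k \<in> {1..K i} \<Longrightarrow> xis i k \<in> polytope (C i) (d i)"
      using samples unfolding Xi_def by simp
    have WCx: "worst_case (wball (Xi i) (\<epsilon> i) (empirical (K i) (xis i))) (h i xstar)
        \<le> ereal (obj i (lamstar i) (sstar i))"
      unfolding hx Xi_def obj_def
      apply (rule weak_duality[OF K_pos L_pos eps_nonneg, where g = "gamstar i"])
       apply (erule samp)
      using GNE_feas[of i] unfolding feas_def by (rule conjunct2)
    show "worst_case (wball (Xi i) (\<epsilon> i) (empirical (K i) (xis i))) (h i xstar)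
        \<le> worst_case (wball (Xi i) (\<epsilon> i) (empirical (K i) (xis i))) (h i (xstar(i := y)))"
    proof (rule ccontr)
      assume "\<not> ?thesis"
      then have lt: "worst_case (wball (Xi i) (\<epsilon> i) (empirical (K i) (xis i))) (h i xy)
          < worst_case (wball (Xi i) (\<epsilon> i) (empirical (K i) (xis i))) (h i xstar)"
        unfolding xy_def by simp
      obtain w where w: "worst_case (wball (Xi i) (\<epsilon> i) (empirical (K i) (xis i))) (h i xy) < ereal w"
        "ereal w < worst_case (wball (Xi i) (\<epsilon> i) (empirical (K i) (xis i))) (h i xstar)"
        using ereal_dense2[OF lt] by blast
      have "\<exists>lam s (g :: nat \<Rightarrow> nat \<Rightarrow> real^'m). (\<forall>k\<in>{1..K i}. \<forall>l\<in>{1..L i}.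
               b i l xy + a i l xy \<bullet> xis i k + g k l \<bullet> (d i - C i *v xis i k) \<le> s k \<and>
               norm (transpose (C i) *v g k l - a i l xy) \<le> lam \<and> (\<forall>j. 0 \<le> g k l $ j)) \<and>
           lam * \<epsilon> i + 1 / real (K i) * (\<Sum>k = 1..K i. s k) \<le> w"
        apply (rule strong_duality[OF K_pos L_pos eps_nonneg, where a = "\<lambda>l. a i l xy" and b = "\<lambda>l. b i l xy"])
         apply (erule samp)
        using w(1) unfolding h_def Xi_def .
      then obtain lam s g where fe: "\<forall>k\<in>{1..K i}. \<forall>l\<in>{1..L i}.
               b i l xy + a i l xy \<bullet> xis i k + g k l \<bullet> (d i - C i *v xis i k) \<le> s k \<and>
               norm (transpose (C i) *v g k l - a i l xy) \<le> lam \<and> (\<forall>j. 0 \<le> g k l $ j)"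
          and ob: "lam * \<epsilon> i + 1 / real (K i) * (\<Sum>k = 1..K i. s k) \<le> w"
        by blast
      have "feas i xy lam s g" unfolding feas_def using fe y unfolding xy_def by simp
      then have "obj i (lamstar i) (sstar i) \<le> obj i lam s" unfolding xy_def by (rule GNE_opt)
      also have "obj i lam s \<le> w" using ob unfolding obj_def by simp
      finally have "worst_case (wball (Xi i) (\<epsilon> i) (empirical (K i) (xis i))) (h i xstar) \<le> ereal w"
        using WCx by (meson ereal_less_eq(3) order.trans)
      then show False using w(2) by simp
    qed
  qed
qed

end
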